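(* For $n\ge 4$ let $G'_n$ be the directed graph with nodes $0,\dots,n-1$ and arcs: $i\to i+1$ for $0\le i\le n-5$; $(n-4)\to(n-3)$; $(n-4)\to(n-1)$; $(n-1)\to(n-2)$; $(n-2)\to(n-1)$; and $j\to 0$ for every $1\le j\le n-1$. Then $\lim_{n\to\infty}R(G'_n)=1$.
   Context: $d_G(x,y)$ is the shortest directed path length from $x$ to $y$ ($\infty$ if none). The distance-count matrix $C_G\in\mathbb{R}^{n\times n}$ has $(C_G)_{i,k}=|\{j: d_G(j,i)=k\}|$. For $\mathbf a\in\mathbb{R}^{\mathbb{N}}$ (with $a_0$ arbitrary) the linear centrality is $f^{\mathbf a}_G(i)=\sum_{k=0}^{n-1}(C_G)_{i,k}a_k$. A permutation $\pi$ of $\{0,\dots,n-1\}$ is representable by $G$ if there is $\mathbf a$ with $f^{\mathbf a}_G(\pi(0))>\dots>f^{\mathbf a}_G(\pi(n-1))$. $R(G)=|\{\pi\in S_n:\pi\text{ representable by }G\}|/n!$. *)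

theory Defs
  imports Complex_Main "HOL-Combinatorics.Permutations"
begin

definition dist_is :: "(nat \<Rightarrow> nat \<Rightarrow> bool) \<Rightarrow> nat \<Rightarrow> nat \<Rightarrow> nat \<Rightarrow> bool" where
  "dist_is E j i k \<longleftrightarrow> (E ^^ k) j i \<and> (\<forall>m<k. \<not> (E ^^ m) j i)"

definition dist_count :: "nat \<Rightarrow> (nat \<Rightarrow> nat \<Rightarrow> bool) \<Rightarrow> nat \<Rightarrow> nat \<Rightarrow> nat" where
  "dist_count n E i k = card {j. j < n \<and> dist_is E j i k}"

definition lin_centrality :: "nat \<Rightarrow> (nat \<Rightarrow> nat \<Rightarrow> bool) \<Rightarrow> (nat \<Rightarrow> real) \<Rightarrow> nat \<Rightarrow> real" where
  "lin_centrality n E a i = (\<Sum>k<n. real (dist_count n E i k) * a k)"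

definition representable :: "nat \<Rightarrow> (nat \<Rightarrow> nat \<Rightarrow> bool) \<Rightarrow> (nat \<Rightarrow> nat) \<Rightarrow> bool" where
  "representable n E \<pi> \<longleftrightarrow>
     (\<exists>a. \<forall>t. t + 1 < n \<longrightarrow> lin_centrality n E a (\<pi> t) > lin_centrality n E a (\<pi> (t + 1)))"

definition R_ratio :: "nat \<Rightarrow> (nat \<Rightarrow> nat \<Rightarrow> bool) \<Rightarrow> real" where
  "R_ratio n E = real (card {\<pi>. \<pi> permutes {..<n} \<and> representable n E \<pi>}) / fact n"

text \<open>The graph G'_n (meaningful for n >= 4).\<close>
definition G' :: "nat \<Rightarrow> nat \<Rightarrow> nat \<Rightarrow> bool" where
  "G' n u v \<longleftrightarrow>
     (u + 5 \<le> n \<and> v = u + 1)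
   \<or> (u = n - 4 \<and> v = n - 3)
   \<or> (u = n - 4 \<and> v = n - 1)
   \<or> (u = n - 1 \<and> v = n - 2)
   \<or> (u = n - 2 \<and> v = n - 1)
   \<or> (1 \<le> u \<and> u \<le> n - 1 \<and> v = 0)"

end

theory Submission
  imports Defs
begin

lemma G'_simp: "G' (m+6) u v \<longleftrightarrow>
   (u \<le> m+1 \<and> v = u+1) \<or> (u = m+2 \<and> v = m+3) \<or> (u = m+2 \<and> v = m+5)
 \<or> (u = m+5 \<and> v = m+4) \<or> (u = m+4 \<and> v = m+5) \<or> (1 \<le> u \<and> u \<le> m+5 \<and> v = 0)"
proof -
  have e: "m+6-4 = m+2" "m+6-3=m+3" "m+6-2 = m+4" "m+6-1 = m+5" "(u+5 \<le> m+6) = (u \<le> m+1)" by auto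
  show ?thesis unfolding G'_def e by (rule refl)
qed

definition dd :: "nat \<Rightarrow> nat \<Rightarrow> nat \<Rightarrow> nat" where
 "dd m j i = (if j = i then 0 else if i = 0 then 1
   else if i \<le> m+2 then (if j < i then i-j else i+1)
   else if i = m+3 then (if j \<le> m+2 then m+3-j else m+4)
   else if i = m+5 then (if j = m+4 then 1 else if j \<le> m+2 then m+3-j else m+4)
   else (if j = m+5 then 1 else if j \<le> m+2 then m+4-j else m+5))"

lemma dd_0: "dd m j 0 \<le> 1" by (simp add: dd_def)
lemma dd_ch: "i \<le> m+2 \<Longrightarrow> dd m j i = (if j \<le> i then i - j else i + 1)"
  by (simp add: dd_def)
lemma dd_3: "dd m j (m+3) = (if j \<le> m+3 then m+3-j else m+4)"
  by (simp add: dd_def)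
lemma dd_5: "dd m j (m+5) = (if j = m+5 then 0 else if j = m+4 then 1 else if j \<le> m+2 then m+3-j else m+4)"
  by (simp add: dd_def)
lemma dd_4: "dd m j (m+4) = (if j = m+4 then 0 else if j = m+5 then 1 else if j \<le> m+2 then m+4-j else m+5)"
  by (simp add: dd_def)

lemma tri: assumes "G' (m+6) u w" "j < m+6" shows "dd m j w \<le> dd m j u + 1"
  using assms(1) unfolding G'_simp
proof (elim disjE conjE)
  assume "u \<le> m+1" "w = u+1" then show ?thesis by (auto simp add: dd_ch)
next
  assume "u = m+2" "w = m+3" then show ?thesis by (simp only: dd_3 dd_ch[of "m+2"]) auto
next
  assume "u = m+2" "w = m+5" then show ?thesis by (simp only: dd_5 dd_ch[of "m+2"]) auto
next
  assume "u = m+5" "w = m+4" then show ?thesis by (simp only: dd_5 dd_4) auto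
next
  assume "u = m+4" "w = m+5" then show ?thesis by (simp only: dd_5 dd_4) auto
next
  assume "w = 0" then show ?thesis using dd_0[of m j] by simp
qed

lemma lower: "(G' (m+6) ^^ k) j i \<Longrightarrow> j < m+6 \<Longrightarrow> dd m j i \<le> k"
proof (induction k arbitrary: i)
  case 0 then show ?case by (simp add: dd_def)
next
  case (Suc k)
  from Suc.prems(1) obtain u where "(G' (m+6) ^^ k) j u" "G' (m+6) u i" by (rule relpowp_Suc_E)
  with Suc.IH[of u] Suc.prems(2) tri[of m u i j] show ?case by auto
qed

lemma comp: "(E ^^ a) x y \<Longrightarrow> (E ^^ b) y z \<Longrightarrow> (E ^^ (a+b)) x z"
  by (auto simp: relpowp_add)

lemma chain: "j \<le> i \<Longrightarrow> i \<le> m+2 \<Longrightarrow> (G' (m+6) ^^ (i-j)) j i"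
proof (induction i)
  case 0 then show ?case by simp
next
  case (Suc i)
  show ?case
  proof (cases "j = Suc i")
    case True then show ?thesis by simp
  next
    case False
    then have "(G' (m+6) ^^ (i-j)) j i" using Suc by auto
    moreover have "G' (m+6) i (Suc i)" using Suc.prems by (simp add: G'_simp)
    ultimately have "(G' (m+6) ^^ Suc (i-j)) j (Suc i)" by (rule relpowp_Suc_I)
    moreover have "Suc (i-j) = Suc i - j" using False Suc.prems by auto
    ultimately show ?thesis by metis
  qed
qed

lemma witness: assumes j: "j < m+6" and i: "i < m+6" shows "(G' (m+6) ^^ dd m j i) j i"
proof -
  let ?E = "G' (m+6)"
  have ch: "\<And>j i. j \<le> i \<Longrightarrow> i \<le> m+2 \<Longrightarrow> (?E ^^ (i-j)) j i" by (rule chain)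
  have c0: "\<And>i. i \<le> m+2 \<Longrightarrow> (?E ^^ i) 0 i" using ch[of 0] by simp
  have z: "\<And>j. 1 \<le> j \<Longrightarrow> j \<le> m+5 \<Longrightarrow> (?E ^^ 1) j 0" unfolding relpowp_1 by (simp add: G'_simp)
  have a1: "(?E ^^ 1) (m+2) (m+3)" "(?E ^^ 1) (m+2) (m+5)" "(?E ^^ 1) (m+5) (m+4)" "(?E ^^ 1) (m+4) (m+5)"
    unfolding relpowp_1 by (simp_all add: G'_simp)
  have jc: "j \<le> m+2 \<Longrightarrow> (?E ^^ (m+2-j)) j (m+2)" using ch[of j "m+2"] by simp
  have zc: "1 \<le> j \<Longrightarrow> (?E ^^ (1 + (m+2))) j (m+2)" using comp[OF z[of j] c0[of "m+2"]] j by simp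
  show ?thesis
  proof (cases "i \<le> m+2")
    case True
    show ?thesis
    proof (cases "j \<le> i")
      case True
      then show ?thesis using ch[of j i] \<open>i \<le> m+2\<close> dd_ch[of i m j] by metis
    next
      case False
      have w: "(?E ^^ (1 + i)) j i" using comp[OF z[of j] c0[of i]] False \<open>i \<le> m+2\<close> j by simp
      have "dd m j i = 1 + i" using dd_ch[of i m j] False \<open>i \<le> m+2\<close> by simp
      then show ?thesis using w by metis
    qed
  next
    case ni: False
    consider "i = m+3" | "i = m+4" | "i = m+5" using ni i by linarith
    then show ?thesis
    proof cases
      case 1
      show ?thesis
      proof (cases "j \<le> m+2")
        case True
        have w: "(?E ^^ (m+2-j+1)) j (m+3)" using comp[OF jc[OF True] a1(1)] .
        have "dd m j i = m+2-j+1" using True 1 dd_3[of m j] by simp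
        then show ?thesis using w 1 by metis
      next
        case False
        show ?thesis
        proof (cases "j = m+3")
          case True then show ?thesis using 1 by (simp add: dd_def)
        next
          case False
          have w: "(?E ^^ (1+(m+2)+1)) j (m+3)" using comp[OF zc a1(1)] \<open>\<not> j \<le> m+2\<close> by simp
          have "dd m j i = 1+(m+2)+1" using False \<open>\<not> j \<le> m+2\<close> 1 dd_3[of m j] by simp
          then show ?thesis using w 1 by metis
        qed
      qed
    next
      case 3
      show ?thesis
      proof (cases "j \<le> m+2")
        case True
        have w: "(?E ^^ (m+2-j+1)) j (m+5)" using comp[OF jc[OF True] a1(2)] .
        have "dd m j i = m+2-j+1" using True 3 dd_5[of m j] by simp
        then show ?thesis using w 3 by metis
      next
        case False
        then consider "j = m+4" | "j = m+3" | "j = m+5" using j by linarith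
        then show ?thesis
        proof cases
          case 1
          have "dd m j i = 1" using 1 3 dd_5[of m j] by simp
          then show ?thesis using 3 a1(4) 1 by metis
        next
          case 2
          have w: "(?E ^^ (1+(m+2)+1)) j (m+5)" using comp[OF zc a1(2)] 2 by simp
          have "dd m j i = 1+(m+2)+1" using 2 3 dd_5[of m j] by simp
          then show ?thesis using w 3 by metis
        next
          case 4: 3
          then show ?thesis using 3 by (simp add: dd_def)
        qed
      qed
    next
      case 2
      show ?thesis
      proof (cases "j \<le> m+2")
        case True
        have w: "(?E ^^ (m+2-j+1+1)) j (m+4)" using comp[OF comp[OF jc[OF True] a1(2)] a1(3)] .
        have "dd m j i = m+2-j+1+1" using True 2 dd_4[of m j] by simp
        then show ?thesis using w 2 by metis
      next
        case False
        then consider "j = m+5" | "j = m+3" | "j = m+4" using j by linarith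
        then show ?thesis
        proof cases
          case 1
          have "dd m j i = 1" using 1 2 dd_4[of m j] by simp
          then show ?thesis using 2 a1(3) 1 by metis
        next
          case 3: 2
          have w: "(?E ^^ (1+(m+2)+1+1)) j (m+4)" using comp[OF comp[OF zc a1(2)] a1(3)] 3 by simp
          have "dd m j i = 1+(m+2)+1+1" using 2 3 dd_4[of m j] by simp
          then show ?thesis using w 2 by metis
        next
          case 4: 3
          then show ?thesis using 2 by (simp add: dd_def)
        qed
      qed
    qed
  qed
qed

lemma dist_is_iff: "j < m+6 \<Longrightarrow> i < m+6 \<Longrightarrow> dist_is (G' (m+6)) j i k \<longleftrightarrow> k = dd m j i"
  unfolding dist_is_def using witness lower
  by (metis le_antisym not_le)

lemma dd_lt: "j < m+6 \<Longrightarrow> i < m+6 \<Longrightarrow> dd m j i < m+6"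
  unfolding dd_def by auto

lemma lin_eq: assumes "i < m+6"
  shows "lin_centrality (m+6) (G' (m+6)) a i = (\<Sum>j<m+6. a (dd m j i))"
proof -
  have "(\<Sum>j<m+6. a (dd m j i)) = (\<Sum>k<m+6. \<Sum>j\<in>{j\<in>{..<m+6}. dd m j i = k}. a (dd m j i))"
    by (rule sum.group[symmetric]) (use dd_lt assms in auto)
  also have "\<dots> = (\<Sum>k<m+6. real (dist_count (m+6) (G' (m+6)) i k) * a k)"
  proof (rule sum.cong[OF refl])
    fix k assume "k \<in> {..<m+6}"
    have "{j\<in>{..<m+6}. dd m j i = k} = {j. j < m+6 \<and> dist_is (G' (m+6)) j i k}"
      using dist_is_iff assms by auto
    moreover have "(\<Sum>j\<in>{j\<in>{..<m+6}. dd m j i = k}. a (dd m j i)) = (\<Sum>j\<in>{j\<in>{..<m+6}. dd m j i = k}. a k)"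
      by (rule sum.cong) auto
    ultimately show "(\<Sum>j\<in>{j\<in>{..<m+6}. dd m j i = k}. a (dd m j i)) = real (dist_count (m+6) (G' (m+6)) i k) * a k"
      unfolding dist_count_def by simp
  qed
  finally show ?thesis unfolding lin_centrality_def by simp
qed

lemma convex_bound:
  fixes s v :: "nat \<Rightarrow> real" and M D :: real
  assumes s0: "s 0 = v 0"
    and sS: "\<And>k. s (Suc k) = s k + (v k - s k) / real (m+5-k)"
    and vM: "\<And>i. i \<le> m+2 \<Longrightarrow> v i \<le> M"
    and D: "D \<ge> 0"
  shows "k \<le> m+3 \<Longrightarrow> 1 \<le> k \<Longrightarrow> s k \<le> M \<and>
     (\<forall>i0<k. v i0 \<le> M - D \<longrightarrow> (M - s k) * (real m + 6)^2 \<ge> real (m+5-k) * D)"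
proof (induction k)
  case 0 then show ?case by simp
next
  case (Suc k)
  define q where "q = (real m + 6)^2"
  have q1: "q \<ge> real m + 6" unfolding q_def by (simp add: power2_eq_square)
  show ?case
  proof (cases "k = 0")
    case True
    have s1: "s 1 = v 0" using sS[of 0] s0 by simp
    have "v 0 \<le> M" using vM by simp
    moreover have "v 0 \<le> M - D \<Longrightarrow> (M - v 0) * q \<ge> real (m+4) * D"
    proof -
      assume h: "v 0 \<le> M - D"
      have "real (m+4) * D \<le> q * D" using q1 D by (intro mult_right_mono) auto
      also have "\<dots> \<le> q * (M - v 0)" using h q1 by (intro mult_left_mono) auto
      finally show ?thesis by (simp add: mult.commute)
    qed
    ultimately show ?thesis using True s1 by (auto simp: q_def add.commute)
  next
    case False
    then have k1: "1 \<le> k" by simp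
    have km: "k \<le> m+2" using Suc.prems by simp
    from Suc.IH[OF _ k1] km have IH: "s k \<le> M"
      "\<And>i0. i0 < k \<Longrightarrow> v i0 \<le> M - D \<Longrightarrow> (M - s k) * q \<ge> real (m+5-k) * D"
      by (auto simp: q_def)
    define c where "c = real (m+5-k)"
    have c3: "c \<ge> 3" unfolding c_def using km by simp
    have cS: "real (m+5 - Suc k) = c - 1" unfolding c_def using km by simp
    define g where "g = M - s k"
    define e where "e = M - v k"
    have g0: "g \<ge> 0" using IH(1) g_def by simp
    have e0: "e \<ge> 0" using vM[OF km] e_def by simp
    have key: "M - s (Suc k) = g * ((c-1)/c) + e / c"
      unfolding sS g_def e_def c_def[symmetric] using c3 by (simp add: field_simps)
    have p1: "g * ((c-1)/c) \<ge> 0" using g0 c3 by simp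
    have p2: "e / c \<ge> 0" using e0 c3 by simp
    have "s (Suc k) \<le> M" using key p1 p2 by linarith
    moreover have "\<forall>i0<Suc k. v i0 \<le> M - D \<longrightarrow> (M - s (Suc k)) * q \<ge> (c - 1) * D"
    proof (intro allI impI)
      fix i0 assume i0: "i0 < Suc k" "v i0 \<le> M - D"
      show "(M - s (Suc k)) * q \<ge> (c - 1) * D"
      proof (cases "i0 < k")
        case True
        have gq: "g * q \<ge> c * D" using IH(2)[OF True i0(2)] g_def c_def by simp
        have "(c - 1) * D = ((c-1)/c) * (c * D)" using c3 by simp
        also have "\<dots> \<le> ((c-1)/c) * (g * q)" using gq c3 by (intro mult_left_mono) auto
        also have "\<dots> = (g * ((c-1)/c)) * q" by simp
        also have "\<dots> \<le> (g * ((c-1)/c) + e / c) * q" using p2 q1 by (intro mult_right_mono) auto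
        finally show ?thesis using key by simp
      next
        case False
        then have "i0 = k" using i0 by simp
        then have eD: "e \<ge> D" using i0 e_def by simp
        have cq: "c * (c - 1) \<le> q"
        proof -
          have "c \<le> real m + 6" unfolding c_def using km by simp
          then have "c * (c-1) \<le> (real m + 6) * (real m + 6)" using c3 by (intro mult_mono) auto
          then show ?thesis unfolding q_def by (simp add: power2_eq_square)
        qed
        have "(c - 1) * D = (c * (c-1)) * (D / c)" using c3 by simp
        also have "\<dots> \<le> q * (D / c)" using cq D c3 by (intro mult_right_mono) auto
        also have "\<dots> \<le> q * (e / c)" using eD c3 q1 by (intro mult_left_mono divide_right_mono) auto
        also have "\<dots> \<le> q * (g * ((c-1)/c) + e / c)" using p1 q1 by (intro mult_left_mono) auto
        finally show ?thesis using key by (simp add: mult.commute)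
      qed
    qed
    ultimately show ?thesis using cS by (simp add: q_def)
  qed
qed

fun Sx :: "nat \<Rightarrow> (nat \<Rightarrow> real) \<Rightarrow> nat \<Rightarrow> real" where
  "Sx m v 0 = v 0"
| "Sx m v (Suc k) = Sx m v k + (v k - Sx m v k) / real (m+5-k)"

definition aa :: "nat \<Rightarrow> (nat \<Rightarrow> real) \<Rightarrow> nat \<Rightarrow> real" where
  "aa m v k = (if k = 0 then v 0 else if k \<le> m+3 then Sx m v k - Sx m v (k-1)
     else if k = m+4 then (v (m+3) - Sx m v (m+3))/2
     else v (m+4) - Sx m v (m+3) - (v (m+3) - Sx m v (m+3))/2)"

lemma psum: "k \<le> m+3 \<Longrightarrow> (\<Sum>i\<le>k. aa m v i) = Sx m v k"
proof (induction k)
  case 0 then show ?case by (simp add: aa_def)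
next
  case (Suc k) then show ?case by (simp add: aa_def del: Sx.simps)
qed

lemma rev_sum: fixes g :: "nat \<Rightarrow> real" shows "(\<Sum>j\<le>p. g (p - j)) = (\<Sum>k\<le>p. g k)"
  using sum.atLeastAtMost_rev[of g 0 p] by (simp add: atMost_atLeast0)

lemma split6: fixes m :: nat and g :: "nat \<Rightarrow> real" shows "(\<Sum>j<m+6. g j) = (\<Sum>j\<le>m+2. g j) + g (m+3) + g (m+4) + (g (m+5) :: real)"
proof -
  have e: "m+6 = Suc (Suc (Suc (Suc (m+2))))" by simp
  show ?thesis unfolding e sum.lessThan_Suc lessThan_Suc_atMost by (simp add: add.assoc numeral_eq_Suc)
qed

lemma cent_ch: assumes "i \<le> m+2"
  shows "(\<Sum>j<m+6. a (dd m j i)) = (\<Sum>k\<le>i. a k) + real (m+5-i) * (a (i+1) :: real)"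
proof -
  have U: "{..<m+6} = {..i} \<union> {i<..<m+6}" using assms by auto
  have "(\<Sum>j<m+6. a (dd m j i)) = (\<Sum>j\<le>i. a (dd m j i)) + (\<Sum>j\<in>{i<..<m+6}. a (dd m j i))"
    unfolding U by (rule sum.union_disjoint) auto
  also have "(\<Sum>j\<le>i. a (dd m j i)) = (\<Sum>j\<le>i. a (i - j))"
    by (rule sum.cong) (use assms dd_ch in auto)
  also have "\<dots> = (\<Sum>k\<le>i. a k)" by (rule rev_sum)
  also have "(\<Sum>j\<in>{i<..<m+6}. a (dd m j i)) = (\<Sum>j\<in>{i<..<m+6}. a (i+1))"
    by (rule sum.cong) (use assms dd_ch in auto)
  also have "\<dots> = real (m+5-i) * a (i+1)"
  proof -
    have "card {i<..<m+6} = m+5-i" by simp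
    then show ?thesis by simp
  qed
  finally show ?thesis .
qed

lemma cent_3: fixes a :: "nat \<Rightarrow> real" shows "(\<Sum>j<m+6. a (dd m j (m+3))) = (\<Sum>k\<le>m+3. a k) + 2 * a (m+4)"
proof -
  let ?g = "\<lambda>j. a (dd m j (m+3))"
  have S: "(\<Sum>j<m+6. ?g j) = (\<Sum>j\<le>m+2. ?g j) + ?g (m+3) + ?g (m+4) + ?g (m+5)"
    by (rule split6)
  have e: "Suc (m+2) = m+3" by simp
  have S2: "(\<Sum>j\<le>m+3. ?g j) = (\<Sum>j\<le>m+2. ?g j) + ?g (m+3)"
    using sum.atMost_Suc[of ?g "m+2"] by (simp only: e)
  have v4: "?g (m+4) = a (m+4)" "?g (m+5) = a (m+4)" by (simp_all add: dd_3)
  have "(\<Sum>j\<le>m+3. ?g j) = (\<Sum>j\<le>m+3. a (m+3-j))"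
    by (rule sum.cong[OF refl]) (simp add: dd_3)
  also have "\<dots> = (\<Sum>k\<le>m+3. a k)" by (rule rev_sum)
  finally show ?thesis using S S2 v4 by linarith
qed

lemma shift1: fixes m :: nat and a :: "nat \<Rightarrow> real" shows "(\<Sum>j\<le>m+2. a (m+3-j)) = (\<Sum>k\<le>m+3. a k) - a 0"
proof -
  have "(\<Sum>j\<le>m+2. a (m+3-j)) = (\<Sum>j\<le>m+2. a (Suc (m+2-j)))"
  proof (rule sum.cong[OF refl])
    fix x assume "x \<in> {..m+2}"
    then have "m+3-x = Suc (m+2-x)" by auto
    then show "a (m+3-x) = a (Suc (m+2-x))" by (rule arg_cong)
  qed
  also have "\<dots> = (\<Sum>k\<le>m+2. a (Suc k))" by (rule rev_sum)
  finally have A: "(\<Sum>j\<le>m+2. a (m+3-j)) = (\<Sum>k\<le>m+2. a (Suc k))" .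
  have e: "Suc (m+2) = m+3" by simp
  have B: "(\<Sum>k\<le>m+3. a k) = a 0 + (\<Sum>k\<le>m+2. a (Suc k))"
    using sum.atMost_Suc_shift[of a "m+2"] by (simp only: e)
  show ?thesis using A B by linarith
qed

lemma shift2: fixes m :: nat and a :: "nat \<Rightarrow> real" shows "(\<Sum>j\<le>m+2. a (m+4-j)) = (\<Sum>k\<le>m+3. a k) + a (m+4) - a 0 - a (Suc 0)"
proof -
  have "(\<Sum>j\<le>m+2. a (m+4-j)) = (\<Sum>j\<le>m+2. a (Suc (Suc (m+2-j))))"
  proof (rule sum.cong[OF refl])
    fix x assume "x \<in> {..m+2}"
    then have "m+4-x = Suc (Suc (m+2-x))" by auto
    then show "a (m+4-x) = a (Suc (Suc (m+2-x)))" by (rule arg_cong)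
  qed
  also have "\<dots> = (\<Sum>k\<le>m+2. a (Suc (Suc k)))" by (rule rev_sum)
  finally have A: "(\<Sum>j\<le>m+2. a (m+4-j)) = (\<Sum>k\<le>m+2. a (Suc (Suc k)))" .
  have e: "Suc (m+2) = m+3" "Suc (m+3) = m+4" by simp_all
  have B: "(\<Sum>k\<le>m+4. a k) = a 0 + (\<Sum>k\<le>m+3. a (Suc k))"
    using sum.atMost_Suc_shift[of a "m+3"] by (simp only: e)
  have C: "(\<Sum>k\<le>m+3. a (Suc k)) = a (Suc 0) + (\<Sum>k\<le>m+2. a (Suc (Suc k)))"
    using sum.atMost_Suc_shift[of "\<lambda>k. a (Suc k)" "m+2"] by (simp only: e)
  have D: "(\<Sum>k\<le>m+4. a k) = (\<Sum>k\<le>m+3. a k) + a (m+4)"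
    using sum.atMost_Suc[of a "m+3"] by (simp only: e)
  show ?thesis using A B C D by linarith
qed

lemma cent_5: fixes a :: "nat \<Rightarrow> real" shows "(\<Sum>j<m+6. a (dd m j (m+5))) = (\<Sum>k\<le>m+3. a k) + a (m+4) + a (Suc 0)"
proof -
  let ?g = "\<lambda>j. a (dd m j (m+5))"
  have S: "(\<Sum>j<m+6. ?g j) = (\<Sum>j\<le>m+2. ?g j) + ?g (m+3) + ?g (m+4) + ?g (m+5)"
    by (rule split6)
  have v: "?g (m+3) = a (m+4)" "?g (m+4) = a (Suc 0)" "?g (m+5) = a 0" by (simp_all add: dd_5)
  have "(\<Sum>j\<le>m+2. ?g j) = (\<Sum>j\<le>m+2. a (m+3-j))"
    by (rule sum.cong[OF refl]) (simp add: dd_5)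
  then show ?thesis using S v shift1[where m=m and a=a] by linarith
qed

lemma cent_4: fixes a :: "nat \<Rightarrow> real" shows "(\<Sum>j<m+6. a (dd m j (m+4))) = (\<Sum>k\<le>m+3. a k) + a (m+4) + a (m+5)"
proof -
  let ?g = "\<lambda>j. a (dd m j (m+4))"
  have S: "(\<Sum>j<m+6. ?g j) = (\<Sum>j\<le>m+2. ?g j) + ?g (m+3) + ?g (m+4) + ?g (m+5)"
    by (rule split6)
  have v: "?g (m+3) = a (m+5)" "?g (m+4) = a 0" "?g (m+5) = a (Suc 0)" by (simp_all add: dd_4)
  have "(\<Sum>j\<le>m+2. ?g j) = (\<Sum>j\<le>m+2. a (m+4-j))"
    by (rule sum.cong[OF refl]) (simp add: dd_4)
  then show ?thesis using S v shift2[where m=m and a=a] by linarith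
qed

lemma construct:
  shows "i \<le> m+4 \<Longrightarrow> (\<Sum>j<m+6. aa m v (dd m j i)) = v i"
    and "(\<Sum>j<m+6. aa m v (dd m j (m+5))) = (Sx m v (m+3) + v (m+3)) / 2"
proof -
  have a1: "aa m v (Suc 0) = 0" by (simp add: aa_def)
  have P: "(\<Sum>k\<le>m+3. aa m v k) = Sx m v (m+3)" by (rule psum) simp
  show "(\<Sum>j<m+6. aa m v (dd m j (m+5))) = (Sx m v (m+3) + v (m+3)) / 2"
    unfolding cent_5 P a1 by (simp add: aa_def field_simps)
  assume i: "i \<le> m+4"
  consider "i \<le> m+2" | "i = m+3" | "i = m+4" using i by linarith
  then show "(\<Sum>j<m+6. aa m v (dd m j i)) = v i"
  proof cases
    case 1
    have P: "(\<Sum>k\<le>i. aa m v k) = Sx m v i" by (rule psum) (use 1 in simp)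
    have c: "real (m+5-i) \<noteq> 0" using 1 by simp
    have "aa m v (i+1) = Sx m v (Suc i) - Sx m v i" using 1 by (simp add: aa_def del: Sx.simps)
    then show ?thesis unfolding cent_ch[OF 1] P using c by (simp add: field_simps)
  next
    case 2
    show ?thesis unfolding 2 cent_3 P by (simp add: aa_def field_simps)
  next
    case 3
    show ?thesis unfolding 3 cent_4 P by (simp add: aa_def field_simps)
  qed
qed

lemma aux_neg: fixes a b c :: real shows "(- a - - b) / c = - ((a - b) / c)"
proof -
  have "- a - - b = - (a - b)" by simp
  then show ?thesis using minus_divide_left[of "a - b" c] by simp
qed

lemma neg_rec: "- Sx m v (Suc k) = - Sx m v k + ((- v k) - (- Sx m v k)) / real (m+5-k)"
proof -
  have A: "Sx m v (Suc k) = Sx m v k + (v k - Sx m v k) / real (m+5-k)" by (rule Sx.simps(2))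
  show ?thesis unfolding aux_neg A by (simp only: minus_add_distrib)
qed

lemma repr:
  assumes p: "\<pi> permutes {..<m+6}" and t2: "2 \<le> t" and t3: "t \<le> m+3" and pt: "\<pi> t = m+5"
  shows "representable (m+6) (G' (m+6)) \<pi>"
proof -
  define N :: real where "N = real m + 6"
  define c :: real where "c = N^3"
  define h :: "nat \<Rightarrow> real" where "h s = (if s < t then c + N - real s else - real s)" for s
  define v where "v i = h (inv \<pi> i)" for i
  define a where "a = aa m v"
  define X where "X = (Sx m v (m+3) + v (m+3)) / 2"
  have N6: "N \<ge> 6" unfolding N_def by simp
  have N2: "N^2 > 0" using N6 by simp
  have cN: "c = N * N^2" unfolding c_def by (simp add: power3_eq_cube power2_eq_square)
  have N36: "N^2 \<ge> 36"
  proof -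
    have "(6::real)^2 \<le> N^2" by (rule power_mono) (use N6 in auto)
    then show ?thesis by simp
  qed
  have cge: "c \<ge> 36 * N"
  proof -
    have "N * 36 \<le> N * N^2" by (rule mult_left_mono[OF N36]) (use N6 in simp)
    then show ?thesis unfolding cN by simp
  qed
  have inj: "inj \<pi>" using p by (rule permutes_inj)
  have ne: "\<And>x y. x \<noteq> y \<Longrightarrow> \<pi> x \<noteq> \<pi> y" using inj by (meson injD)
  have pin: "\<And>s. s < m+6 \<Longrightarrow> \<pi> s < m+6" using permutes_in_image[OF p] by simp
  have vp: "\<And>s. v (\<pi> s) = h s" unfolding v_def using permutes_inverses(2)[OF p] by simp
  have f_eq: "\<And>i. i < m+6 \<Longrightarrow> lin_centrality (m+6) (G' (m+6)) a i = (if i = m+5 then X else v i)"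
  proof -
    fix i assume i: "i < m+6"
    show "lin_centrality (m+6) (G' (m+6)) a i = (if i = m+5 then X else v i)"
    proof (cases "i = m+5")
      case True then show ?thesis unfolding lin_eq[OF i] a_def X_def using construct(2) by simp
    next
      case False then have "i \<le> m+4" using i by simp
      then show ?thesis unfolding lin_eq[OF i] a_def using construct(1) False by simp
    qed
  qed
  have Sx0: "Sx m v 0 = v 0" by simp
  have ht1: "h (t-1) = c + N - real (t-1)" unfolding h_def using t2 by simp
  have ht1b: "h (t-1) \<ge> c + 4" using ht1 t3 unfolding N_def by simp
  have ht2: "h (t+1) = - real (t+1)" unfolding h_def by simp
  have upper: "X < h (t-1)"
  proof -
    define M where "M = c + N"
    have vM: "\<And>i. v i \<le> M" unfolding v_def h_def M_def using N6 cge by auto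
    have sM: "Sx m v (m+3) \<le> M" using convex_bound[of "Sx m v" v m M 0, OF Sx0 Sx.simps(2) vM] by simp
    obtain z s0 where z: "z = \<pi> s0" "t < s0" "s0 < m+6" "z \<noteq> m+4" "z \<noteq> m+5"
    proof (cases "\<pi> (t+1) = m+4")
      case True
      have "\<pi> (t+2) \<noteq> m+4" using ne[of "t+2" "t+1"] True by simp
      moreover have "\<pi> (t+2) \<noteq> m+5" using ne[of "t+2" t] pt by simp
      ultimately show ?thesis using that[of "\<pi> (t+2)" "t+2"] t3 by simp
    next
      case False
      moreover have "\<pi> (t+1) \<noteq> m+5" using ne[of "t+1" t] pt by simp
      ultimately show ?thesis using that[of "\<pi> (t+1)" "t+1"] t3 by simp
    qed
    have zl: "z \<le> m+3" using z pin by fastforce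
    have vz: "v z \<le> -1" using z vp unfolding h_def by simp
    show ?thesis
    proof (cases "z = m+3")
      case True
      have "X \<le> (M + (-1)) / 2" unfolding X_def using sM vz True by simp
      also have "\<dots> < h (t-1)" using ht1b cge N6 unfolding M_def by simp
      finally show ?thesis .
    next
      case False
      then have zl2: "z \<le> m+2" using zl by simp
      define D where "D = c + N + 1"
      have D0: "D \<ge> 0" unfolding D_def using N6 cge by simp
      have vzD: "v z \<le> M - D" unfolding M_def D_def using vz by simp
      have cb: "\<forall>i0<m+3. v i0 \<le> M - D \<longrightarrow> (M - Sx m v (m+3)) * (real m + 6)^2 \<ge> real (m+5-(m+3)) * D"
        using convex_bound[of "Sx m v" v m M D, OF Sx0 Sx.simps(2) vM D0, of "m+3"] by simp
      have "(M - Sx m v (m+3)) * N^2 \<ge> real (m+5-(m+3)) * D"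
        using cb[rule_format, of z] zl2 vzD unfolding N_def by simp
      then have A: "(M - Sx m v (m+3)) * N^2 \<ge> 2 * D" by simp
      have "(M - h (t-1)) * N^2 < D"
      proof -
        have "M - h (t-1) = real (t-1)" unfolding M_def ht1 by simp
        also have "\<dots> \<le> N" unfolding N_def using t3 by simp
        finally have "(M - h (t-1)) * N^2 \<le> N * N^2" using N2 by (intro mult_right_mono) auto
        then show ?thesis unfolding D_def cN using N6 by linarith
      qed
      moreover have "(2 * (M - h (t-1))) * N^2 = 2 * ((M - h (t-1)) * N^2)" by (rule mult.assoc)
      ultimately have "(2 * (M - h (t-1))) * N^2 < (M - Sx m v (m+3)) * N^2" using A by linarith
      then have "2 * (M - h (t-1)) < M - Sx m v (m+3)" using N2 by (simp add: mult_less_cancel_right)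
      moreover have "v (m+3) \<le> M" by (rule vM)
      ultimately show ?thesis unfolding X_def by simp
    qed
  qed
  have lower: "X > h (t+1)"
  proof -
    define v' where "v' i = - v i" for i
    define s' where "s' k = - Sx m v k" for k
    have s'0: "s' 0 = v' 0" unfolding s'_def v'_def by simp
    have s'S: "\<And>k. s' (Suc k) = s' k + (v' k - s' k) / real (m+5-k)"
      unfolding s'_def v'_def by (rule neg_rec)
    have vM6: "\<And>i. i < m+6 \<Longrightarrow> v' i \<le> N"
    proof -
      fix i assume i: "i < m+6"
      have "inv \<pi> i < m+6" using permutes_in_image[OF permutes_inv[OF p]] i by simp
      then show "v' i \<le> N" unfolding v'_def v_def h_def N_def using cge N6 by (auto simp: N_def)
    qed
    have vM: "\<And>i. i \<le> m+2 \<Longrightarrow> v' i \<le> N" using vM6 by simp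
    have sM: "s' (m+3) \<le> N" using convex_bound[of s' v' m N 0, OF s'0 s'S vM] by simp
    obtain z s0 where z: "z = \<pi> s0" "s0 < t" "z \<noteq> m+4" "z \<noteq> m+5"
    proof (cases "\<pi> 0 = m+4")
      case True
      have "\<pi> 1 \<noteq> m+4" using ne[of 1 0] True by simp
      moreover have "\<pi> 1 \<noteq> m+5" using ne[of 1 t] pt t2 by simp
      ultimately show ?thesis using that[of "\<pi> 1" 1] t2 by simp
    next
      case False
      moreover have "\<pi> 0 \<noteq> m+5" using ne[of 0 t] pt t2 by simp
      ultimately show ?thesis using that[of "\<pi> 0" 0] t2 by simp
    qed
    have "s0 < m+6" using z t3 by simp
    then have "z < m+6" using z pin by simp
    then have zl: "z \<le> m+3" using z by simp
    have vz: "v' z \<le> - c" using z vp t3 unfolding h_def v'_def N_def by simp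
    show ?thesis
    proof (cases "z = m+3")
      case True
      have "X = - (s' (m+3) + v' (m+3)) / 2" unfolding X_def s'_def v'_def by simp
      also have "\<dots> \<ge> - (N + (- c)) / 2" using sM vz True by simp
      finally have "X \<ge> (c - N) / 2" by simp
      moreover have "(c - N) / 2 > h (t+1)" using ht2 cge N6 by simp
      ultimately show ?thesis by simp
    next
      case False
      then have zl2: "z \<le> m+2" using zl by simp
      define D where "D = c + N"
      have D0: "D \<ge> 0" unfolding D_def using N6 cge by simp
      have vzD: "v' z \<le> N - D" unfolding D_def using vz by simp
      have cb: "\<forall>i0<m+3. v' i0 \<le> N - D \<longrightarrow> (N - s' (m+3)) * (real m + 6)^2 \<ge> real (m+5-(m+3)) * D"
        using convex_bound[of s' v' m N D, OF s'0 s'S vM D0, of "m+3"] by simp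
      have "(N - s' (m+3)) * N^2 \<ge> real (m+5-(m+3)) * D"
        using cb[rule_format, of z] zl2 vzD unfolding N_def by simp
      then have A: "(N - s' (m+3)) * N^2 \<ge> 2 * D" by simp
      have "(2 * N) * N^2 < 2 * D" unfolding D_def cN using N6 by simp
      then have "(2 * N) * N^2 < (N - s' (m+3)) * N^2" using A by linarith
      then have "2 * N < N - s' (m+3)" using N2 by (simp add: mult_less_cancel_right)
      moreover have "v' (m+3) \<le> N" using vM6[of "m+3"] by simp
      ultimately have "s' (m+3) + v' (m+3) < 0" by simp
      moreover have "X = - (s' (m+3) + v' (m+3)) / 2" unfolding X_def s'_def v'_def by simp
      ultimately show ?thesis using ht2 by simp
    qed
  qed
  show ?thesis unfolding representable_def
  proof (intro exI allI impI)
    fix s assume s: "s + 1 < m+6"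
    have F: "\<And>u. u < m+6 \<Longrightarrow> lin_centrality (m+6) (G' (m+6)) a (\<pi> u) = (if u = t then X else h u)"
    proof -
      fix u assume u: "u < m+6"
      have "\<pi> u = m+5 \<longleftrightarrow> u = t" using pt ne[of u t] by auto
      then show "lin_centrality (m+6) (G' (m+6)) a (\<pi> u) = (if u = t then X else h u)"
        using f_eq[OF pin[OF u]] vp by simp
    qed
    have F1: "lin_centrality (m+6) (G' (m+6)) a (\<pi> s) = (if s = t then X else h s)" using F s by simp
    have F2: "lin_centrality (m+6) (G' (m+6)) a (\<pi> (s+1)) = (if s+1 = t then X else h (s+1))" using F s by simp
    show "lin_centrality (m+6) (G' (m+6)) a (\<pi> s) > lin_centrality (m+6) (G' (m+6)) a (\<pi> (s+1))"
    proof (cases "s + 1 = t")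
      case True
      then have "s = t - 1" by simp
      then show ?thesis using F1 F2 True upper t2 by simp
    next
      case ne: False
      show ?thesis
      proof (cases "s = t")
        case True then show ?thesis using F1 F2 lower by simp
      next
        case False
        then show ?thesis using F1 F2 ne unfolding h_def by auto
      qed
    qed
  qed
qed

lemma card_fix:
  assumes S: "finite S" and a: "a \<in> S" and b: "b \<in> S"
  shows "card {p. p permutes S \<and> p a = b} = fact (card S - 1)"
proof -
  let ?T = "transpose a b"
  have eq: "{p. p permutes S \<and> p a = b} = (\<lambda>q. ?T \<circ> q) ` {q. q permutes S - {a}}"
  proof (intro set_eqI iffI)
    fix p assume "p \<in> {p. p permutes S \<and> p a = b}"
    then have p: "p permutes S" "p a = b" by auto
    define q where "q = ?T \<circ> p"
    have qS: "q permutes S" unfolding q_def by (rule permutes_compose[OF p(1) permutes_swap_id[OF a b]])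
    have qa: "q a = a" unfolding q_def using p(2) by simp
    have "q permutes S - {a}" by (rule permutes_superset[OF qS]) (use qa in auto)
    moreover have "p = ?T \<circ> q" unfolding q_def by (simp add: comp_assoc[symmetric])
    ultimately show "p \<in> (\<lambda>q. ?T \<circ> q) ` {q. q permutes S - {a}}" by blast
  next
    fix p assume "p \<in> (\<lambda>q. ?T \<circ> q) ` {q. q permutes S - {a}}"
    then obtain q where q: "q permutes S - {a}" and pq: "p = ?T \<circ> q" by blast
    have qS: "q permutes S" by (rule permutes_subset[OF q]) auto
    have qa: "q a = a" using q by (rule permutes_not_in) simp
    have "p permutes S" unfolding pq by (rule permutes_compose[OF qS permutes_swap_id[OF a b]])
    moreover have "p a = b" unfolding pq using qa by simp
    ultimately show "p \<in> {p. p permutes S \<and> p a = b}" by simp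
  qed
  have inj: "inj_on (\<lambda>q. ?T \<circ> q) {q. q permutes S - {a}}"
  proof (rule inj_onI)
    fix x y assume "?T \<circ> x = ?T \<circ> y"
    then have "?T \<circ> (?T \<circ> x) = ?T \<circ> (?T \<circ> y)" by simp
    then show "x = y" by (simp add: comp_assoc[symmetric])
  qed
  have "card {p. p permutes S \<and> p a = b} = card {q. q permutes S - {a}}"
    unfolding eq by (rule card_image[OF inj])
  also have "\<dots> = fact (card (S - {a}))" by (rule card_permutations) (use S in auto)
  also have "card (S - {a}) = card S - 1" using S a by simp
  finally show ?thesis .
qed

lemma good_card:
  "card {\<pi>. \<pi> permutes {..<m+6} \<and> (\<exists>t\<in>{2..m+3}. \<pi> t = m+5)} = (m+2) * fact (m+5)"
proof -
  have eq: "{\<pi>. \<pi> permutes {..<m+6} \<and> (\<exists>t\<in>{2..m+3}. \<pi> t = m+5)}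
      = (\<Union>t\<in>{2..m+3}. {\<pi>. \<pi> permutes {..<m+6} \<and> \<pi> t = m+5})" by auto
  have fin: "\<And>t. finite {\<pi>. \<pi> permutes {..<m+6} \<and> \<pi> t = m+5}"
    by (rule finite_subset[OF _ finite_permutations[of "{..<m+6}"]]) auto
  have disj: "\<forall>t\<in>{2..m+3}. \<forall>t'\<in>{2..m+3}. t \<noteq> t' \<longrightarrow>
      {\<pi>. \<pi> permutes {..<m+6} \<and> \<pi> t = m+5} \<inter> {\<pi>. \<pi> permutes {..<m+6} \<and> \<pi> t' = m+5} = {}"
  proof (intro ballI impI equalityI subsetI)
    fix t t' \<pi> assume tt: "t \<noteq> t'" and
      P: "\<pi> \<in> {\<pi>. \<pi> permutes {..<m+6} \<and> \<pi> t = m+5} \<inter> {\<pi>. \<pi> permutes {..<m+6} \<and> \<pi> t' = m+5}"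
    then have "inj \<pi>" "\<pi> t = \<pi> t'" using permutes_inj by auto
    then have "t = t'" by (rule injD)
    then show "\<pi> \<in> {}" using tt by simp
  qed simp
  have "card (\<Union>t\<in>{2..m+3}. {\<pi>. \<pi> permutes {..<m+6} \<and> \<pi> t = m+5})
     = (\<Sum>t\<in>{2..m+3}. card {\<pi>. \<pi> permutes {..<m+6} \<and> \<pi> t = m+5})"
    by (rule card_UN_disjoint) (use fin disj in auto)
  also have "\<dots> = (\<Sum>t\<in>{2..m+3}. fact (m+5))"
  proof (rule sum.cong[OF refl])
    fix t assume "t \<in> {2..m+3}"
    then have "card {\<pi>. \<pi> permutes {..<m+6} \<and> \<pi> t = m+5} = fact (card {..<m+6} - 1)"
      by (intro card_fix) auto
    then show "card {\<pi>. \<pi> permutes {..<m+6} \<and> \<pi> t = m+5} = fact (m+5)" by (simp add: add.commute)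
  qed
  also have "\<dots> = (m+2) * fact (m+5)" by simp
  finally show ?thesis unfolding eq .
qed

lemma R_bounds: "real (m+2) / real (m+6) \<le> R_ratio (m+6) (G' (m+6)) \<and> R_ratio (m+6) (G' (m+6)) \<le> 1"
proof -
  let ?P = "{\<pi>. \<pi> permutes {..<m+6} \<and> representable (m+6) (G' (m+6)) \<pi>}"
  let ?G = "{\<pi>. \<pi> permutes {..<m+6} \<and> (\<exists>t\<in>{2..m+3}. \<pi> t = m+5)}"
  have finP: "finite ?P" by (rule finite_subset[OF _ finite_permutations[of "{..<m+6}"]]) auto
  have sub: "?G \<subseteq> ?P" using repr by auto
  have "card ?G \<le> card ?P" by (rule card_mono[OF finP sub])
  then have lo: "real ((m+2) * fact (m+5)) \<le> real (card ?P)" unfolding good_card by linarith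
  have "card ?P \<le> card {\<pi>. \<pi> permutes {..<m+6}}"
    by (rule card_mono[OF finite_permutations]) auto
  also have "\<dots> = fact (m+6)" by (rule card_permutations) auto
  finally have hi: "real (card ?P) \<le> fact (m+6)" by (metis of_nat_fact of_nat_le_iff)
  have fpos: "(fact (m+6) :: real) > 0" by simp
  have f6: "(fact (m+6) :: real) = real (m+6) * fact (m+5)"
    using fact_Suc[of "m+5"] by (simp add: algebra_simps)
  have "real (m+2) / real (m+6) = real ((m+2) * fact (m+5)) / fact (m+6)"
  proof -
    have F: "(fact (m+5) :: real) \<noteq> 0" by simp
    have "real ((m+2) * fact (m+5)) / fact (m+6) = (real (m+2) * fact (m+5)) / (real (m+6) * fact (m+5))"
      unfolding f6 of_nat_mult of_nat_fact by (rule refl)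
    also have "\<dots> = real (m+2) / real (m+6)" using F by (rule nonzero_mult_divide_mult_cancel_right)
    finally show ?thesis by simp
  qed
  also have "\<dots> \<le> real (card ?P) / fact (m+6)" using lo fpos by (simp add: divide_right_mono)
  finally have A: "real (m+2) / real (m+6) \<le> R_ratio (m+6) (G' (m+6))" unfolding R_ratio_def .
  have B: "R_ratio (m+6) (G' (m+6)) \<le> 1" unfolding R_ratio_def using hi fpos by simp
  show ?thesis using A B by simp
qed

theorem corollary6:
  shows "(\<lambda>n. R_ratio n (G' n)) \<longlonglongrightarrow> 1"
proof (rule LIMSEQ_offset[where k=6])
  have L: "(\<lambda>m. real (m+2) / real (m+6)) \<longlonglongrightarrow> 1"
  proof -
    have "(\<lambda>n. 4 / real n) \<longlonglongrightarrow> 0" by (rule lim_const_over_n)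
    then have "(\<lambda>m. 4 / real (m+6)) \<longlonglongrightarrow> 0" by (rule LIMSEQ_ignore_initial_segment)
    then have "(\<lambda>m. 1 - 4 / real (m+6)) \<longlonglongrightarrow> 1 - 0" by (intro tendsto_intros)
    moreover have "\<And>m. 1 - 4 / real (m+6) = real (m+2) / real (m+6)"
      by (simp add: field_simps)
    ultimately show ?thesis by simp
  qed
  show "(\<lambda>m. R_ratio (m+6) (G' (m+6))) \<longlonglongrightarrow> 1"
    by (rule tendsto_sandwich[OF _ _ L tendsto_const]) (use R_bounds in auto)
qed

end
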